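(* In the setting described in the context, the following two-sided estimates hold: $$|J(u)-J(u_h^{(2)})|-|\mathcal{R}^{(3)}-\mathcal{R}^{(3)(2)}|\le|\eta_h-\eta_h^{(2)}|\le|J(u)-J(u_h^{(2)})|+|\mathcal{R}^{(3)}-\mathcal{R}^{(3)(2)}|,$$ and $$|J(u)-J(\tilde u)|-|\rho(\tilde u)(\tilde z)|-|\mathcal{R}^{(3)}|\le|\eta_h|\le|J(u)-J(\tilde u)|+|\rho(\tilde u)(\tilde z)|+|\mathcal{R}^{(3)}|.$$
   Context: Let $U$ and $V$ be real Banach spaces with dual $V^*$. Let $\mathcal{A}:U\to V^*$ be a (nonlinear) operator that is three times continuously Fréchet differentiable, and let $J:U\to\mathbb{R}$ be three times continuously Fréchet differentiable. Notation: $\mathcal{A}(w)(v)$ is the value of $\mathcal{A}(w)\in V^*$ at $v\in V$. For fixed $v$, $\mathcal{A}'(w)(\varphi,v)$, $\mathcal{A}''(w)(\varphi,\psi,v)$ and $\mathcal{A}'''(w)(\varphi,\psi,\chi,v)$ denote the first, second and third Fréchet derivatives of $w\mapsto\mathcal{A}(w)(v)$ at $w$ in the directions $\varphi,\psi,\chi\in U$. Analogously, $J'(w)(\varphi)$ and $J'''(w)(\varphi,\psi,\chi)$ denote derivatives of $J$. Let $u\in U$ satisfy $\mathcal{A}(u)(v)=0$ for all $v\in V$, and let $z\in V$ satisfy $\mathcal{A}'(u)(\varphi,z)=J'(u)(\varphi)$ for all $\varphi\in U$. Let $U_h^{(2)}\subset U$ and $V_h^{(2)}\subset V$ be finite-dimensional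 subspaces. Let $u_h^{(2)}\in U_h^{(2)}$ satisfy $\mathcal{A}(u_h^{(2)})(v)=0$ for all $v\in V_h^{(2)}$. Let $z_h^{(2)}\in V_h^{(2)}$ satisfy $\mathcal{A}'(u_h^{(2)})(\varphi,z_h^{(2)})=J'(u_h^{(2)})(\varphi)$ for all $\varphi\in U_h^{(2)}$. Let $\tilde u\in U_h^{(2)}$ and $\tilde z\in V_h^{(2)}$ be arbitrary fixed elements. Define $\rho(\tilde u)(v):=-\mathcal{A}(\tilde u)(v)$ and $\rho^*(\tilde u,\tilde z)(\varphi):=J'(\tilde u)(\varphi)-\mathcal{A}'(\tilde u)(\varphi,\tilde z)$. With $e:=u-\tilde u$ and $e^*:=z-\tilde z$, define $$\mathcal{R}^{(3)}:=\frac12\int_0^1\Big[J'''(\tilde u+se)(e,e,e)-\mathcal{A}'''(\tilde u+se)(e,e,e,\tilde z+se^* )-3\mathcal{A}''(\tilde u+se)(e,e,e^* )\Big]s(s-1)\,ds.$$ Let $\mathcal{R}^{(3)(2)}$ be the same expression with $e,e^*,z$ replaced by $e^{(2)}:=u_h^{(2)}-\tilde u$, $e^{(2),*}:=z_h^{(2)}-\tilde z$, $z_h^{(2)}$. Define $$\eta_h:=\tfrac12\rho(\tilde u)(z-\tilde z)+\tfrac12\rho^*(\tilde u,\tilde z)(u-\tilde u),\qquad \eta_h^{(2)}:=\tfrac12\rho(\tilde u)(z_h^{(2)}-\tilde z)+\tfrac12\rho^*(\tilde u,\tilde z)(u_h^{(2)}-\tilde u).$$ *)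

theory Defs
  imports "HOL-Analysis.Analysis"
begin

text \<open>Dual space V^* is rendered as the bounded linear functionals 'v \<Rightarrow>L real.
  Multilinear higher derivatives are curried bounded linear maps.\<close>

definition ap1 :: "('a::real_normed_vector \<Rightarrow>\<^sub>L 'b::real_normed_vector) \<Rightarrow> 'a \<Rightarrow> 'b"
  where "ap1 L x = blinfun_apply L x"

definition ap2 :: "('a::real_normed_vector \<Rightarrow>\<^sub>L 'b::real_normed_vector \<Rightarrow>\<^sub>L 'c::real_normed_vector)
   \<Rightarrow> 'a \<Rightarrow> 'b \<Rightarrow> 'c"
  where "ap2 L x y = blinfun_apply (blinfun_apply L x) y"

definition ap3 :: "('a::real_normed_vector \<Rightarrow>\<^sub>L 'b::real_normed_vector \<Rightarrow>\<^sub>L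
     'c::real_normed_vector \<Rightarrow>\<^sub>L 'd::real_normed_vector) \<Rightarrow> 'a \<Rightarrow> 'b \<Rightarrow> 'c \<Rightarrow> 'd"
  where "ap3 L x y w = blinfun_apply (blinfun_apply (blinfun_apply L x) y) w"

definition ap4 :: "('a::real_normed_vector \<Rightarrow>\<^sub>L 'b::real_normed_vector \<Rightarrow>\<^sub>L
     'c::real_normed_vector \<Rightarrow>\<^sub>L 'd::real_normed_vector \<Rightarrow>\<^sub>L 'e::real_normed_vector)
   \<Rightarrow> 'a \<Rightarrow> 'b \<Rightarrow> 'c \<Rightarrow> 'd \<Rightarrow> 'e"
  where "ap4 L x y w t = blinfun_apply (blinfun_apply (blinfun_apply (blinfun_apply L x) y) w) t"

definition R3 ::
  "('u::real_normed_vector \<Rightarrow> ('u \<Rightarrow>\<^sub>L 'u \<Rightarrow>\<^sub>L 'u \<Rightarrow>\<^sub>L real))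
   \<Rightarrow> ('u \<Rightarrow> ('u \<Rightarrow>\<^sub>L 'u \<Rightarrow>\<^sub>L 'v::real_normed_vector \<Rightarrow>\<^sub>L real))
   \<Rightarrow> ('u \<Rightarrow> ('u \<Rightarrow>\<^sub>L 'u \<Rightarrow>\<^sub>L 'u \<Rightarrow>\<^sub>L 'v \<Rightarrow>\<^sub>L real))
   \<Rightarrow> 'u \<Rightarrow> 'v \<Rightarrow> 'u \<Rightarrow> 'v \<Rightarrow> real"
  where "R3 J3 A2 A3 ut zt e es =
     1/2 * integral {0..1::real} (\<lambda>s.
        (ap3 (J3 (ut + s *\<^sub>R e)) e e e
         - ap4 (A3 (ut + s *\<^sub>R e)) e e e (zt + s *\<^sub>R es)
         - 3 * ap3 (A2 (ut + s *\<^sub>R e)) e e es) * (s * (s - 1)))"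

end

theory Submission
  imports Defs
begin


lemma path_vd:
  assumes "\<And>w. (f has_derivative blinfun_apply (F1 w)) (at w)"
  shows "((\<lambda>s. f (ut + s *\<^sub>R e)) has_vector_derivative blinfun_apply (F1 (ut + s *\<^sub>R e)) e) (at s)"
proof -
  have p: "((\<lambda>s::real. ut + s *\<^sub>R e) has_vector_derivative e) (at s)"
    by (auto intro!: derivative_eq_intros)
  have "((f \<circ> (\<lambda>s::real. ut + s *\<^sub>R e)) has_vector_derivative blinfun_apply (F1 (ut + s *\<^sub>R e)) e) (at s)"
    by (rule vector_derivative_diff_chain_within[OF p]) (rule has_derivative_at_withinI[OF assms])
  then show ?thesis by (simp add: o_def)
qed

lemma app_vd:
  assumes "(G has_vector_derivative G') (at s)" "(x has_vector_derivative x') (at s)"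
  shows "((\<lambda>s. blinfun_apply (G s) (x s)) has_vector_derivative
     (blinfun_apply (G s) x' + blinfun_apply G' (x s))) (at s)"
  by (rule blinfun.has_vector_derivative[OF assms])

lemma trap:
  fixes g g1 g2 g3 :: "real \<Rightarrow> real"
  assumes d0: "\<And>s. (g has_real_derivative g1 s) (at s)"
    and d1: "\<And>s. (g1 has_real_derivative g2 s) (at s)"
    and d2: "\<And>s. (g2 has_real_derivative g3 s) (at s)"
  shows "1/2 * integral {0..1} (\<lambda>s. g3 s * (s * (s - 1))) = g 1 - g 0 - (g1 0 + g1 1) / 2"
proof -
  define H where "H s = 1/2 * (g2 s * (s * (s - 1)) - g1 s * (2 * s - 1) + 2 * g s)" for s
  have dH: "(H has_real_derivative 1/2 * (g3 s * (s * (s - 1)))) (at s)" for s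
    unfolding H_def
    by (rule derivative_eq_intros d0 d1 d2 refl)+ (simp add: algebra_simps)
  have "((\<lambda>s. 1/2 * (g3 s * (s * (s - 1)))) has_integral (H 1 - H 0)) {0..1}"
  proof (rule fundamental_theorem_of_calculus)
    fix x :: real
    show "(H has_vector_derivative 1/2 * (g3 x * (x * (x - 1)))) (at x within {0..1})"
      by (rule has_vector_derivative_at_within)
         (rule dH[unfolded has_real_derivative_iff_has_vector_derivative])
  qed simp
  then have "integral {0..1} (\<lambda>s. 1/2 * (g3 s * (s * (s - 1)))) = H 1 - H 0"
    by (rule integral_unique)
  moreover have "integral {0..1} (\<lambda>s. 1/2 * (g3 s * (s * (s - 1))))
      = 1/2 * integral {0..1} (\<lambda>s. g3 s * (s * (s - 1)))"
    by (rule integral_mult_right)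
  ultimately show ?thesis by (simp add: H_def field_simps)
qed


lemma app_c:
  assumes "(G has_vector_derivative G') (at s)"
  shows "((\<lambda>s. blinfun_apply (G s) c) has_vector_derivative blinfun_apply G' c) (at s)"
  using app_vd[OF assms has_vector_derivative_const[of c]] by simp

lemma hvd_eq: "(f has_vector_derivative a) F \<Longrightarrow> a = b \<Longrightarrow> (f has_vector_derivative b) F"
  by simp

lemma R3_id:
  fixes J :: "'u::banach \<Rightarrow> real"
    and J1 :: "'u \<Rightarrow> ('u \<Rightarrow>\<^sub>L real)"
    and J2 :: "'u \<Rightarrow> ('u \<Rightarrow>\<^sub>L 'u \<Rightarrow>\<^sub>L real)"
    and J3 :: "'u \<Rightarrow> ('u \<Rightarrow>\<^sub>L 'u \<Rightarrow>\<^sub>L 'u \<Rightarrow>\<^sub>L real)"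
    and A :: "'u \<Rightarrow> ('v::banach \<Rightarrow>\<^sub>L real)"
    and A1 :: "'u \<Rightarrow> ('u \<Rightarrow>\<^sub>L 'v \<Rightarrow>\<^sub>L real)"
    and A2 :: "'u \<Rightarrow> ('u \<Rightarrow>\<^sub>L 'u \<Rightarrow>\<^sub>L 'v \<Rightarrow>\<^sub>L real)"
    and A3 :: "'u \<Rightarrow> ('u \<Rightarrow>\<^sub>L 'u \<Rightarrow>\<^sub>L 'u \<Rightarrow>\<^sub>L 'v \<Rightarrow>\<^sub>L real)"
    and ut e :: 'u and zt es :: 'v
  assumes dJ: "\<And>w. (J has_derivative blinfun_apply (J1 w)) (at w)"
      and dJ1: "\<And>w. (J1 has_derivative blinfun_apply (J2 w)) (at w)"
      and dJ2: "\<And>w. (J2 has_derivative blinfun_apply (J3 w)) (at w)"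
      and dA: "\<And>w. (A has_derivative blinfun_apply (A1 w)) (at w)"
      and dA1: "\<And>w. (A1 has_derivative blinfun_apply (A2 w)) (at w)"
      and dA2: "\<And>w. (A2 has_derivative blinfun_apply (A3 w)) (at w)"
  shows "R3 J3 A2 A3 ut zt e es =
     (J (ut + e) - ap1 (A (ut + e)) (zt + es)) - (J ut - ap1 (A ut) zt)
     - ((ap1 (J1 ut) e - ap2 (A1 ut) e zt - ap1 (A ut) es)
        + (ap1 (J1 (ut + e)) e - ap2 (A1 (ut + e)) e (zt + es) - ap1 (A (ut + e)) es)) / 2"
proof -
  define W where "W s = ut + s *\<^sub>R e" for s :: real
  define X where "X s = zt + s *\<^sub>R es" for s :: real
  define g where "g s = J (W s) - blinfun_apply (A (W s)) (X s)" for s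
  define g1 where "g1 s = blinfun_apply (J1 (W s)) e - blinfun_apply (blinfun_apply (A1 (W s)) e) (X s)
      - blinfun_apply (A (W s)) es" for s
  define g2 where "g2 s = ap2 (J2 (W s)) e e - ap3 (A2 (W s)) e e (X s) - 2 * ap2 (A1 (W s)) e es" for s
  define g3 where "g3 s = ap3 (J3 (W s)) e e e - ap4 (A3 (W s)) e e e (X s)
      - 3 * ap3 (A2 (W s)) e e es" for s
  have vX: "(X has_vector_derivative es) (at s)" for s
    unfolding X_def by (auto intro!: derivative_eq_intros)
  have vJ: "((\<lambda>s. J (W s)) has_vector_derivative blinfun_apply (J1 (W s)) e) (at s)" for s
    unfolding W_def by (rule path_vd[OF dJ])
  have vJ1: "((\<lambda>s. J1 (W s)) has_vector_derivative blinfun_apply (J2 (W s)) e) (at s)" for s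
    unfolding W_def by (rule path_vd[OF dJ1])
  have vJ2: "((\<lambda>s. J2 (W s)) has_vector_derivative blinfun_apply (J3 (W s)) e) (at s)" for s
    unfolding W_def by (rule path_vd[OF dJ2])
  have vA: "((\<lambda>s. A (W s)) has_vector_derivative blinfun_apply (A1 (W s)) e) (at s)" for s
    unfolding W_def by (rule path_vd[OF dA])
  have vA1: "((\<lambda>s. A1 (W s)) has_vector_derivative blinfun_apply (A2 (W s)) e) (at s)" for s
    unfolding W_def by (rule path_vd[OF dA1])
  have vA2: "((\<lambda>s. A2 (W s)) has_vector_derivative blinfun_apply (A3 (W s)) e) (at s)" for s
    unfolding W_def by (rule path_vd[OF dA2])
  have d0: "(g has_real_derivative g1 s) (at s)" for s
    unfolding has_real_derivative_iff_has_vector_derivative g_def[abs_def]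
    by (rule hvd_eq, rule has_vector_derivative_diff[OF vJ app_vd[OF vA vX]])
       (simp add: g1_def)
  have d1: "(g1 has_real_derivative g2 s) (at s)" for s
    unfolding has_real_derivative_iff_has_vector_derivative g1_def[abs_def]
    by (rule hvd_eq, rule has_vector_derivative_diff[OF has_vector_derivative_diff[OF
          app_c[OF vJ1] app_vd[OF app_c[OF vA1] vX]] app_c[OF vA]])
       (simp add: g2_def ap2_def ap3_def)
  have d2: "(g2 has_real_derivative g3 s) (at s)" for s
    unfolding has_real_derivative_iff_has_vector_derivative g2_def[abs_def] ap2_def ap3_def
    by (rule hvd_eq, rule has_vector_derivative_diff[OF has_vector_derivative_diff[OF
          app_c[OF app_c[OF vJ2]] app_vd[OF app_c[OF app_c[OF vA2]] vX]]
          has_vector_derivative_mult_right[OF app_c[OF app_c[OF vA1]]]])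
       (simp add: g3_def ap3_def ap4_def)
  have "R3 J3 A2 A3 ut zt e es = 1/2 * integral {0..1} (\<lambda>s. g3 s * (s * (s - 1)))"
    unfolding R3_def g3_def W_def X_def by simp
  also have "\<dots> = g 1 - g 0 - (g1 0 + g1 1) / 2"
    by (rule trap[OF d0 d1 d2])
  finally show ?thesis
    by (simp add: g_def g1_def W_def X_def ap1_def ap2_def)
qed


lemma abs2: "(a::real) = b + c \<Longrightarrow> \<bar>a\<bar> - \<bar>c\<bar> \<le> \<bar>b\<bar> \<and> \<bar>b\<bar> \<le> \<bar>a\<bar> + \<bar>c\<bar>"
  by arith

lemma abs3: "(a::real) = b + d + c \<Longrightarrow> \<bar>a\<bar> - \<bar>d\<bar> - \<bar>c\<bar> \<le> \<bar>b\<bar> \<and> \<bar>b\<bar> \<le> \<bar>a\<bar> + \<bar>d\<bar> + \<bar>c\<bar>"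
  by arith

theorem mainTheorem7:
  fixes J :: "'u::banach \<Rightarrow> real"
    and J1 :: "'u \<Rightarrow> ('u \<Rightarrow>\<^sub>L real)"
    and J2 :: "'u \<Rightarrow> ('u \<Rightarrow>\<^sub>L 'u \<Rightarrow>\<^sub>L real)"
    and J3 :: "'u \<Rightarrow> ('u \<Rightarrow>\<^sub>L 'u \<Rightarrow>\<^sub>L 'u \<Rightarrow>\<^sub>L real)"
    and A :: "'u \<Rightarrow> ('v::banach \<Rightarrow>\<^sub>L real)"
    and A1 :: "'u \<Rightarrow> ('u \<Rightarrow>\<^sub>L 'v \<Rightarrow>\<^sub>L real)"
    and A2 :: "'u \<Rightarrow> ('u \<Rightarrow>\<^sub>L 'u \<Rightarrow>\<^sub>L 'v \<Rightarrow>\<^sub>L real)"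
    and A3 :: "'u \<Rightarrow> ('u \<Rightarrow>\<^sub>L 'u \<Rightarrow>\<^sub>L 'u \<Rightarrow>\<^sub>L 'v \<Rightarrow>\<^sub>L real)"
    and Uh2 :: "'u set" and Vh2 :: "'v set"
    and u uh2 ut :: 'u and z zh2 zt :: 'v
  assumes dJ: "\<And>w. (J has_derivative blinfun_apply (J1 w)) (at w)"
      and dJ1: "\<And>w. (J1 has_derivative blinfun_apply (J2 w)) (at w)"
      and dJ2: "\<And>w. (J2 has_derivative blinfun_apply (J3 w)) (at w)"
      and cJ3: "continuous_on UNIV J3"
      and dA: "\<And>w. (A has_derivative blinfun_apply (A1 w)) (at w)"
      and dA1: "\<And>w. (A1 has_derivative blinfun_apply (A2 w)) (at w)"
      and dA2: "\<And>w. (A2 has_derivative blinfun_apply (A3 w)) (at w)"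
      and cA3: "continuous_on UNIV A3"
      and primal: "\<And>v. ap1 (A u) v = 0"
      and dual: "\<And>\<phi>. ap2 (A1 u) \<phi> z = ap1 (J1 u) \<phi>"
      and Uh2_fin: "subspace Uh2" "\<exists>B. finite B \<and> Uh2 = span B"
      and Vh2_fin: "subspace Vh2" "\<exists>B. finite B \<and> Vh2 = span B"
      and uh2_in: "uh2 \<in> Uh2"
      and primal_h: "\<And>v. v \<in> Vh2 \<Longrightarrow> ap1 (A uh2) v = 0"
      and zh2_in: "zh2 \<in> Vh2"
      and dual_h: "\<And>\<phi>. \<phi> \<in> Uh2 \<Longrightarrow> ap2 (A1 uh2) \<phi> zh2 = ap1 (J1 uh2) \<phi>"
      and ut_in: "ut \<in> Uh2"
      and zt_in: "zt \<in> Vh2"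
  shows
    "let \<rho> = (\<lambda>v. - ap1 (A ut) v);
         \<rho>s = (\<lambda>\<phi>. ap1 (J1 ut) \<phi> - ap2 (A1 ut) \<phi> zt);
         \<eta> = 1/2 * \<rho> (z - zt) + 1/2 * \<rho>s (u - ut);
         \<eta>2 = 1/2 * \<rho> (zh2 - zt) + 1/2 * \<rho>s (uh2 - ut);
         R = R3 J3 A2 A3 ut zt (u - ut) (z - zt);
         R2 = R3 J3 A2 A3 ut zt (uh2 - ut) (zh2 - zt)
     in (\<bar>J u - J uh2\<bar> - \<bar>R - R2\<bar> \<le> \<bar>\<eta> - \<eta>2\<bar>
         \<and> \<bar>\<eta> - \<eta>2\<bar> \<le> \<bar>J u - J uh2\<bar> + \<bar>R - R2\<bar>)
      \<and> (\<bar>J u - J ut\<bar> - \<bar>\<rho> zt\<bar> - \<bar>R\<bar> \<le> \<bar>\<eta>\<bar>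
         \<and> \<bar>\<eta>\<bar> \<le> \<bar>J u - J ut\<bar> + \<bar>\<rho> zt\<bar> + \<bar>R\<bar>)"
  proof -
  have e2: "uh2 - ut \<in> Uh2" using Uh2_fin(1) uh2_in ut_in by (rule subspace_diff)
  have es2: "zh2 - zt \<in> Vh2" using Vh2_fin(1) zh2_in zt_in by (rule subspace_diff)
  have R1: "R3 J3 A2 A3 ut zt (u - ut) (z - zt) =
      J u - J ut + ap1 (A ut) zt
      - (1/2 * (- ap1 (A ut) (z - zt)) + 1/2 * (ap1 (J1 ut) (u - ut) - ap2 (A1 ut) (u - ut) zt))"
    using R3_id[OF dJ dJ1 dJ2 dA dA1 dA2, of ut zt "u - ut" "z - zt"]
    by (simp add: primal dual algebra_simps) (simp add: field_simps)
  have R2: "R3 J3 A2 A3 ut zt (uh2 - ut) (zh2 - zt) =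
      J uh2 - J ut + ap1 (A ut) zt
      - (1/2 * (- ap1 (A ut) (zh2 - zt)) + 1/2 * (ap1 (J1 ut) (uh2 - ut) - ap2 (A1 ut) (uh2 - ut) zt))"
    using R3_id[OF dJ dJ1 dJ2 dA dA1 dA2, of ut zt "uh2 - ut" "zh2 - zt"]
    by (simp add: primal_h[OF es2] primal_h[OF zh2_in] dual_h[OF e2] algebra_simps) (simp add: field_simps)
  show ?thesis
    unfolding Let_def
    by (rule conjI; rule abs2 abs3) (simp_all add: R1 R2)
qed

end
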